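(* Let $\mathcal A=\sum_{\alpha\in I_N}\langle\mathbf A_\alpha(\mathbf k,\mathbf x_\alpha)\cdot\rangle_\alpha$ be an operator on $L^2([0,1)^N,\mathbb C^M)$ with $h$-staircase $M\times M$ matrix coefficients $\mathbf A_\alpha$. If $\mathcal A=0$ then $\mathbf A_\alpha=0$ for all $\alpha\in I_N$; i.e. the representation of an operator in this form is unique.
   Context: Let $N,M,p$ be positive integers and $h=1/p$. $I_N$ is the set of all subsets of $\{1,\dots,N\}$; for $\alpha\in I_N$, $|\alpha|$ is its cardinality and $\bar\alpha$ its complement. For $\mathbf x=(x_i)$, $\mathbf x_\alpha=(x_i)_{i\in\alpha}\in[0,1)^{|\alpha|}$ (increasing indices). For disjoint $\alpha,\beta$, $\mathbf y_\beta\diamond\mathbf x_\alpha=\mathbf z_{\alpha\cup\beta}$ with $z_i=x_i$ for $i\in\alpha$, $z_i=y_i$ for $i\in\beta$. $\langle f\rangle_\alpha=\int_{[0,1)^{|\alpha|}}f\,d\mathbf x_\alpha$, $\langle f\rangle_\emptyset=f$. $\chi^h_i$ is the indicator of $[i/p,(i+1)/p)$; a function on $[0,1)^R$ is $h$-staircase if it is a finite linear combination of $\prod_{j=1}^R\chi^h_{i_j}(y_j)$, a matrix function is $h$-staircase if all entries are. For an $h$-staircase $\mathbf A(\mathbf k,\mathbf x_\alpha)$ on $[0,1)^N\times[0,1)^{|\alpha|}$, $\langle\mathbf A(\mathbf k,\mathbf x_\alpha)\cdot\rangle_\alpha$ denotes the operator $\mathbf u\mapsto\langle\mathbf A(\mathbf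 k,\mathbf x_\alpha)\mathbf u(\mathbf k_{\bar\alpha}\diamond\mathbf x_\alpha)\rangle_\alpha$ (multiplication by $\mathbf A(\mathbf k)$ if $\alpha=\emptyset$). *)

theory Defs
  imports "HOL-Analysis.Analysis"
begin

text \<open>Coordinates are indexed by 0..N-1 (instead of 1..N); points of [0,1)^I are
  extensional functions nat => real, i.e. elements of PiE I (%_. {0..<1}).\<close>

definition cube :: "nat set \<Rightarrow> (nat \<Rightarrow> real) set" where
  "cube I = PiE I (\<lambda>_. {0..<1})"

definition unitI :: "real measure" where
  "unitI = restrict_space lborel {0..<1}"

definition cubeM :: "nat set \<Rightarrow> (nat \<Rightarrow> real) measure" where
  "cubeM I = PiM I (\<lambda>_. unitI)"

text \<open>chi^h_i, the indicator of [i/p,(i+1)/p), h = 1/p.\<close>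
definition chi :: "nat \<Rightarrow> nat \<Rightarrow> real \<Rightarrow> complex" where
  "chi p i y = (if real i / real p \<le> y \<and> y < (real i + 1) / real p then 1 else 0)"

definition diamond :: "nat set \<Rightarrow> (nat \<Rightarrow> real) \<Rightarrow> (nat \<Rightarrow> real) \<Rightarrow> (nat \<Rightarrow> real)" where
  "diamond \<alpha> y x = (\<lambda>i. if i \<in> \<alpha> then x i else y i)"

definition staircase_fun ::
  "nat \<Rightarrow> nat \<Rightarrow> nat set \<Rightarrow> ((nat \<Rightarrow> real) \<Rightarrow> (nat \<Rightarrow> real) \<Rightarrow> complex) \<Rightarrow> bool" where
  "staircase_fun p N \<alpha> f \<longleftrightarrow>
     (\<exists>C :: ((nat \<Rightarrow> nat) \<times> (nat \<Rightarrow> nat)) set. \<exists>a. finite C \<and>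
        (\<forall>k \<in> cube {..<N}. \<forall>x \<in> cube \<alpha>.
           f k x = (\<Sum>(c, d) \<in> C. a (c, d) * (\<Prod>j<N. chi p (c j) (k j))
                                             * (\<Prod>j\<in>\<alpha>. chi p (d j) (x j)))))"

definition staircase_mat ::
  "nat \<Rightarrow> nat \<Rightarrow> nat set \<Rightarrow> ((nat \<Rightarrow> real) \<Rightarrow> (nat \<Rightarrow> real) \<Rightarrow> complex ^ 'm ^ 'm) \<Rightarrow> bool" where
  "staircase_mat p N \<alpha> A \<longleftrightarrow> (\<forall>r s. staircase_fun p N \<alpha> (\<lambda>k x. A k x $ r $ s))"

text \<open>The operator < A(k, x_alpha) . >_alpha applied to u, evaluated at k.
  For alpha = {} the integral over the one-point space cubeM {} is evaluation,
  giving multiplication by A(k).\<close>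
definition avg_op ::
  "nat set \<Rightarrow> ((nat \<Rightarrow> real) \<Rightarrow> (nat \<Rightarrow> real) \<Rightarrow> complex ^ 'm ^ 'm)
    \<Rightarrow> ((nat \<Rightarrow> real) \<Rightarrow> complex ^ 'm) \<Rightarrow> (nat \<Rightarrow> real) \<Rightarrow> complex ^ 'm" where
  "avg_op \<alpha> A u k = (\<integral>x. (A k x *v u (diamond \<alpha> k x)) \<partial>cubeM \<alpha>)"

definition L2 :: "nat \<Rightarrow> ((nat \<Rightarrow> real) \<Rightarrow> complex ^ 'm) \<Rightarrow> bool" where
  "L2 N u \<longleftrightarrow> u \<in> borel_measurable (cubeM {..<N}) \<and>
               integrable (cubeM {..<N}) (\<lambda>k. (norm (u k))\<^sup>2)"

end

theory Submission imports Defs begin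

lemma unitI_fin: "finite_measure unitI"
  unfolding unitI_def
  by (intro finite_measureI) (simp add: space_restrict_space emeasure_restrict_space)

interpretation U: product_sigma_finite "\<lambda>_. unitI"
  unfolding product_sigma_finite_def
  using unitI_fin by (simp add: finite_measure_def)

lemma space_unitI: "space unitI = {0..<1}"
  by (simp add: unitI_def space_restrict_space)

lemma space_cubeM: "space (cubeM S) = cube S"
  by (simp add: cubeM_def cube_def space_PiM space_unitI)

lemma Ico_sets_unitI:
  assumes "0 \<le> a" "b \<le> 1" shows "{a..<b} \<in> sets unitI"
  unfolding unitI_def using assms
  by (subst sets_restrict_space_iff) auto

lemma Ico_emeasure_unitI:
  assumes "0 \<le> a" "a \<le> b" "b \<le> 1" shows "emeasure unitI {a..<b} = ennreal (b - a)"
  unfolding unitI_def using assms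
  by (subst emeasure_restrict_space) auto

definition Iv :: "nat \<Rightarrow> nat \<Rightarrow> real set" where
  "Iv q c = {real c / real q ..< (real c + 1) / real q}"

lemma Iv_sub: "c < q \<Longrightarrow> Iv q c \<subseteq> {0..<1}"
  unfolding Iv_def by (auto simp: field_simps)

lemma box_sets_measure:
  assumes "finite S" "\<And>j. j \<in> S \<Longrightarrow> c j < q" and q: "q > 0"
  shows "PiE S (\<lambda>j. Iv q (c j)) \<in> sets (cubeM S)"
    and "emeasure (cubeM S) (PiE S (\<lambda>j. Iv q (c j))) = ennreal ((1 / real q) ^ card S)"
proof -
  have s: "\<And>j. j \<in> S \<Longrightarrow> Iv q (c j) \<in> sets unitI"
  proof -
    fix j assume j: "j \<in> S"
    have "c j < q" using assms j by auto
    then have "real (c j) + 1 \<le> real q" by linarith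
    then show "Iv q (c j) \<in> sets unitI"
      unfolding Iv_def using q by (intro Ico_sets_unitI) (auto simp: field_simps)
  qed
  show "PiE S (\<lambda>j. Iv q (c j)) \<in> sets (cubeM S)"
    unfolding cubeM_def using assms s by (intro sets_PiM_I_finite) auto
  have e: "\<And>j. j \<in> S \<Longrightarrow> emeasure unitI (Iv q (c j)) = ennreal (1 / real q)"
  proof -
    fix j assume j: "j \<in> S"
    have "c j < q" using assms j by auto
    then have "emeasure unitI (Iv q (c j)) = ennreal ((real (c j) + 1) / real q - real (c j) / real q)"
      unfolding Iv_def using q by (intro Ico_emeasure_unitI) (auto simp: field_simps)
    also have "\<dots> = ennreal (1 / real q)" by (simp add: diff_divide_distrib[symmetric])
    finally show "emeasure unitI (Iv q (c j)) = ennreal (1 / real q)" .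
  qed
  have "emeasure (cubeM S) (PiE S (\<lambda>j. Iv q (c j))) = (\<Prod>j\<in>S. emeasure unitI (Iv q (c j)))"
    unfolding cubeM_def using assms s by (intro U.emeasure_PiM) auto
  also have "\<dots> = (\<Prod>j\<in>S. ennreal (1 / real q))" using e by simp
  also have "\<dots> = ennreal ((1 / real q) ^ card S)"
    by (simp add: ennreal_power)
  finally show "emeasure (cubeM S) (PiE S (\<lambda>j. Iv q (c j))) = ennreal ((1 / real q) ^ card S)" .
qed

lemma chi_floor:
  assumes "p > 0" shows "chi p c y = (if \<lfloor>real p * y\<rfloor> = int c then 1 else 0)"
proof -
  have "(real c / real p \<le> y \<and> y < (real c + 1) / real p) \<longleftrightarrow> \<lfloor>real p * y\<rfloor> = int c"
    using assms by (simp add: floor_eq_iff field_simps)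
  then show ?thesis unfolding chi_def by simp
qed

lemma stair_const:
  assumes p: "p > 0" and st: "staircase_fun p N \<alpha> f"
    and k: "k \<in> cube {..<N}" "k' \<in> cube {..<N}" and x: "x \<in> cube \<alpha>" "x' \<in> cube \<alpha>"
    and fk: "\<And>j. j < N \<Longrightarrow> \<lfloor>real p * k j\<rfloor> = \<lfloor>real p * k' j\<rfloor>"
    and fx: "\<And>j. j \<in> \<alpha> \<Longrightarrow> \<lfloor>real p * x j\<rfloor> = \<lfloor>real p * x' j\<rfloor>"
  shows "f k x = f k' x'"
proof -
  obtain C a where C: "finite C" and eq: "\<forall>k \<in> cube {..<N}. \<forall>x \<in> cube \<alpha>.
           f k x = (\<Sum>(c, d) \<in> C. a (c, d) * (\<Prod>j<N. chi p (c j) (k j))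
                                             * (\<Prod>j\<in>\<alpha>. chi p (d j) (x j)))"
    using st unfolding staircase_fun_def by blast
  have "f k x = (\<Sum>(c, d) \<in> C. a (c, d) * (\<Prod>j<N. chi p (c j) (k j))
                                             * (\<Prod>j\<in>\<alpha>. chi p (d j) (x j)))"
    using eq k x by blast
  also have "\<dots> = (\<Sum>(c, d) \<in> C. a (c, d) * (\<Prod>j<N. chi p (c j) (k' j))
                                             * (\<Prod>j\<in>\<alpha>. chi p (d j) (x' j)))"
    using fk fx by (simp add: chi_floor[OF p])
  also have "\<dots> = f k' x'" using eq k x by simp
  finally show ?thesis .
qed

lemma stair_mat_const:
  assumes p: "p > 0" and st: "staircase_mat p N \<alpha> A"
    and k: "k \<in> cube {..<N}" "k' \<in> cube {..<N}" and x: "x \<in> cube \<alpha>" "x' \<in> cube \<alpha>"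
    and fk: "\<And>j. j < N \<Longrightarrow> \<lfloor>real p * k j\<rfloor> = \<lfloor>real p * k' j\<rfloor>"
    and fx: "\<And>j. j \<in> \<alpha> \<Longrightarrow> \<lfloor>real p * x j\<rfloor> = \<lfloor>real p * x' j\<rfloor>"
  shows "A k x = A k' x'"
proof -
  have "\<And>r s. A k x $ r $ s = A k' x' $ r $ s"
    using stair_const[OF p _ k x fk fx] st unfolding staircase_mat_def by blast
  then show ?thesis by (simp add: vec_eq_iff)
qed

lemma AE_exists:
  assumes "AE k in M. P k" "B \<in> sets M" "emeasure M B \<noteq> 0"
  shows "\<exists>k\<in>B. P k"
proof (rule ccontr)
  assume nt: "\<not> ?thesis"
  obtain Z where Z: "{x \<in> space M. \<not> P x} \<subseteq> Z" "emeasure M Z = 0" "Z \<in> sets M"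
    using assms(1) by (rule AE_E)
  have "B \<subseteq> Z" using Z(1) sets.sets_into_space[OF assms(2)] nt by blast
  then have "emeasure M B \<le> emeasure M Z" using Z(3) by (intro emeasure_mono)
  then show False using Z(2) assms(3) by simp
qed

lemma diamond_PiE:
  assumes k: "k \<in> cube {..<N}" and b: "\<beta> \<subseteq> {..<N}"
  shows "diamond \<beta> k x \<in> PiE {..<N} I \<longleftrightarrow>
     (\<forall>j\<in>\<beta>. x j \<in> I j) \<and> (\<forall>j<N. j \<notin> \<beta> \<longrightarrow> k j \<in> I j)"
  using k b unfolding diamond_def cube_def PiE_iff extensional_def by auto

lemma Iv_floor: "q > 0 \<Longrightarrow> y \<in> Iv q c \<longleftrightarrow> \<lfloor>real q * y\<rfloor> = int c"
  unfolding Iv_def by (simp add: floor_eq_iff field_simps)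

lemma Iv_even: "p > 0 \<Longrightarrow> y \<in> Iv (2*p) (2*m) \<Longrightarrow> \<lfloor>real p * y\<rfloor> = int m"
  unfolding Iv_def by (simp add: floor_eq_iff field_simps)

lemma Iv_odd: "p > 0 \<Longrightarrow> y \<in> Iv (2*p) (2*m+1) \<Longrightarrow> \<lfloor>real p * y\<rfloor> = int m"
  unfolding Iv_def by (simp add: floor_eq_iff field_simps)


lemma step:
  fixes A :: "nat set \<Rightarrow> (nat \<Rightarrow> real) \<Rightarrow> (nat \<Rightarrow> real) \<Rightarrow> complex ^ 'm ^ 'm"
  assumes p: "p > 0"
    and stair: "\<And>\<alpha>. \<alpha> \<subseteq> {..<N} \<Longrightarrow> staircase_mat p N \<alpha> (A \<alpha>)"
    and zero: "\<And>u :: (nat \<Rightarrow> real) \<Rightarrow> complex ^ 'm. L2 N u \<Longrightarrow>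
                 AE k in cubeM {..<N}. (\<Sum>\<alpha> \<in> Pow {..<N}. avg_op \<alpha> (A \<alpha>) u k) = 0"
    and a: "\<alpha> \<subseteq> {..<N}"
    and IH: "\<And>\<beta> k x. \<alpha> \<subset> \<beta> \<Longrightarrow> \<beta> \<subseteq> {..<N} \<Longrightarrow> k \<in> cube {..<N} \<Longrightarrow> x \<in> cube \<beta> \<Longrightarrow> A \<beta> k x = 0"
    and k0: "k0 \<in> cube {..<N}" and x0: "x0 \<in> cube \<alpha>"
  shows "A \<alpha> k0 x0 *v v = 0"
proof -
  define q where "q = 2 * p"
  have q: "q > 0" using p q_def by simp
  define m0 where "m0 j = nat \<lfloor>real p * k0 j\<rfloor>" for j
  define m1 where "m1 j = nat \<lfloor>real p * x0 j\<rfloor>" for j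
  define e where "e j = 2 * m0 j" for j
  define d where "d j = (if j \<in> \<alpha> then 2 * m1 j + 1 else e j)" for j
  have fin: "finite \<alpha>" using a finite_subset by blast
  have k0r: "0 \<le> k0 j \<and> k0 j < 1" if "j < N" for j
    using PiE_mem[OF k0[unfolded cube_def], of j] that by simp
  have x0r: "0 \<le> x0 j \<and> x0 j < 1" if "j \<in> \<alpha>" for j
    using PiE_mem[OF x0[unfolded cube_def], of j] that by simp
  have m0: "\<And>j. j < N \<Longrightarrow> int (m0 j) = \<lfloor>real p * k0 j\<rfloor> \<and> m0 j < p"
  proof -
    fix j assume j: "j < N"
    have h1: "0 \<le> real p * k0 j" and h2: "real p * k0 j < real p" using k0r[OF j] p by auto
    have f1: "0 \<le> \<lfloor>real p * k0 j\<rfloor>" using h1 by simp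
    have f2: "\<lfloor>real p * k0 j\<rfloor> < int p" using h2 by (simp add: floor_less_iff)
    show "int (m0 j) = \<lfloor>real p * k0 j\<rfloor> \<and> m0 j < p" unfolding m0_def using f1 f2 nat_less_iff[OF f1] by simp
  qed
  have m1: "\<And>j. j \<in> \<alpha> \<Longrightarrow> int (m1 j) = \<lfloor>real p * x0 j\<rfloor> \<and> m1 j < p"
  proof -
    fix j assume j: "j \<in> \<alpha>"
    have h1: "0 \<le> real p * x0 j" and h2: "real p * x0 j < real p" using x0r[OF j] p by auto
    have f1: "0 \<le> \<lfloor>real p * x0 j\<rfloor>" using h1 by simp
    have f2: "\<lfloor>real p * x0 j\<rfloor> < int p" using h2 by (simp add: floor_less_iff)
    show "int (m1 j) = \<lfloor>real p * x0 j\<rfloor> \<and> m1 j < p" unfolding m1_def using f1 f2 nat_less_iff[OF f1] by simp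
  qed
  have e_lt: "e j < q" if "j < N" for j
  proof -
    have "m0 j < p" using m0 that by blast
    then show ?thesis unfolding e_def q_def by simp
  qed
  have d_lt: "d j < q" if "j < N" for j
  proof (cases "j \<in> \<alpha>")
    case True
    then have "m1 j < p" using m1 by blast
    then show ?thesis using True unfolding d_def q_def by simp
  next
    case False
    then show ?thesis using e_lt[OF that] unfolding d_def by simp
  qed
  have de: "\<And>j. j \<in> \<alpha> \<Longrightarrow> d j \<noteq> e j" unfolding d_def e_def by presburger
  define Be where "Be = PiE {..<N} (\<lambda>j. Iv q (e j))"
  define Bd where "Bd = PiE {..<N} (\<lambda>j. Iv q (d j))"
  define Ba where "Ba = PiE \<alpha> (\<lambda>j. Iv q (d j))"
  define u where "u y = indicator Bd y *\<^sub>R v" for y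
  have Be: "Be \<in> sets (cubeM {..<N})" "emeasure (cubeM {..<N}) Be \<noteq> 0"
    using box_sets_measure[of "{..<N}" e q] e_lt q unfolding Be_def by auto
  have Bd: "Bd \<in> sets (cubeM {..<N})" "emeasure (cubeM {..<N}) Bd < \<infinity>"
    using box_sets_measure[of "{..<N}" d q] d_lt q unfolding Bd_def by auto
  have Ba: "Ba \<in> sets (cubeM \<alpha>)" "emeasure (cubeM \<alpha>) Ba = ennreal ((1 / real q) ^ card \<alpha>)"
    using box_sets_measure[of "\<alpha>" d q] d_lt q fin a unfolding Ba_def by auto
  have mBa: "measure (cubeM \<alpha>) Ba > 0"
    using Ba(2) q by (simp add: measure_def)
  have Be_cube: "Be \<subseteq> cube {..<N}"
    unfolding Be_def cube_def by (rule PiE_mono) (use Iv_sub e_lt in blast)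
  have L2u: "L2 N u"
  proof -
    have "u \<in> borel_measurable (cubeM {..<N})"
      unfolding u_def using Bd(1) by measurable
    moreover have "(\<lambda>k. (norm (u k))\<^sup>2) = (\<lambda>k. indicator Bd k * (norm v)\<^sup>2)"
      unfolding u_def by (auto simp: indicator_def)
    moreover have "integrable (cubeM {..<N}) (\<lambda>k. indicator Bd k * (norm v)\<^sup>2)"
      using Bd by (intro integrable_mult_left) auto
    ultimately show ?thesis unfolding L2_def by simp
  qed
  obtain k where kB: "k \<in> Be" and ks: "(\<Sum>\<beta> \<in> Pow {..<N}. avg_op \<beta> (A \<beta>) u k) = 0"
    using AE_exists[OF zero[OF L2u] Be] by blast
  have kc: "k \<in> cube {..<N}" using kB Be_cube by blast
  have kI: "k j \<in> Iv q (e j)" if "j < N" for j using PiE_mem[OF kB[unfolded Be_def], of j] that by simp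
  have other: "avg_op \<beta> (A \<beta>) u k = 0" if b: "\<beta> \<in> Pow {..<N} - {\<alpha>}" for \<beta>
  proof (cases "\<alpha> \<subseteq> \<beta>")
    case False
    then obtain j0 where j0: "j0 \<in> \<alpha>" "j0 \<notin> \<beta>" by blast
    have "j0 < N" using a j0 by auto
    have "k j0 \<notin> Iv q (d j0)"
      using kI[OF \<open>j0 < N\<close>] de[OF j0(1)] Iv_floor[OF q] by auto
    moreover have bN: "\<beta> \<subseteq> {..<N}" using b by auto
    ultimately have nb: "diamond \<beta> k x \<notin> Bd" for x
      unfolding Bd_def diamond_PiE[OF kc bN] using j0 \<open>j0 < N\<close> by blast
    then have "\<And>x. u (diamond \<beta> k x) = 0"
      unfolding u_def by simp
    then show ?thesis unfolding avg_op_def by simp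
  next
    case True
    then have ss: "\<alpha> \<subset> \<beta>" using b by auto
    have "avg_op \<beta> (A \<beta>) u k = (\<integral>x. 0 \<partial>cubeM \<beta>)"
      unfolding avg_op_def
      by (rule Bochner_Integration.integral_cong[OF refl])
         (use IH[OF ss _ kc] b in \<open>auto simp: space_cubeM\<close>)
    then show ?thesis by simp
  qed
  have main: "avg_op \<alpha> (A \<alpha>) u k = measure (cubeM \<alpha>) Ba *\<^sub>R (A \<alpha> k0 x0 *v v)"
  proof -
    have "avg_op \<alpha> (A \<alpha>) u k = (\<integral>x. indicator Ba x *\<^sub>R (A \<alpha> k0 x0 *v v) \<partial>cubeM \<alpha>)"
      unfolding avg_op_def
    proof (rule Bochner_Integration.integral_cong[OF refl])
      fix x assume "x \<in> space (cubeM \<alpha>)"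
      then have xc: "x \<in> cube \<alpha>" by (simp add: space_cubeM)
      have iff: "diamond \<alpha> k x \<in> Bd \<longleftrightarrow> x \<in> Ba"
        unfolding Bd_def Ba_def using diamond_PiE[OF kc a] kI xc
        unfolding d_def cube_def by (auto simp: PiE_iff)
      show "A \<alpha> k x *v u (diamond \<alpha> k x) = indicator Ba x *\<^sub>R (A \<alpha> k0 x0 *v v)"
      proof (cases "x \<in> Ba")
        case True
        have "A \<alpha> k x = A \<alpha> k0 x0"
        proof (rule stair_mat_const[OF p stair[OF a] kc k0 xc x0])
          fix j assume j: "j < N"
          show "\<lfloor>real p * k j\<rfloor> = \<lfloor>real p * k0 j\<rfloor>"
            using Iv_even[OF p, of "k j" "m0 j"] kI[OF j] m0[OF j] unfolding e_def q_def by simp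
        next
          fix j assume j: "j \<in> \<alpha>"
          have "x j \<in> Iv q (d j)" using PiE_mem[OF True[unfolded Ba_def] j] .
          then show "\<lfloor>real p * x j\<rfloor> = \<lfloor>real p * x0 j\<rfloor>"
            using Iv_odd[OF p, of "x j" "m1 j"] m1[OF j] j unfolding d_def q_def by simp
        qed
        then show ?thesis using True iff unfolding u_def
          by (simp add: matrix_vector_mult_scaleR)
      next
        case False
        then show ?thesis using iff unfolding u_def by simp
      qed
    qed
    also have "\<dots> = measure (cubeM \<alpha>) Ba *\<^sub>R (A \<alpha> k0 x0 *v v)"
      using Ba by (simp add: sets.Int_space_eq2)
    finally show ?thesis .
  qed
  have "(\<Sum>\<beta> \<in> Pow {..<N}. avg_op \<beta> (A \<beta>) u k) = avg_op \<alpha> (A \<alpha>) u k"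
    using a other by (subst sum.remove[of _ \<alpha>]) auto
  then have "measure (cubeM \<alpha>) Ba *\<^sub>R (A \<alpha> k0 x0 *v v) = 0" using ks main by simp
  then show ?thesis using mBa by simp
qed


theorem lemma1:
  fixes N p :: nat
    and A :: "nat set \<Rightarrow> (nat \<Rightarrow> real) \<Rightarrow> (nat \<Rightarrow> real) \<Rightarrow> complex ^ 'm ^ 'm"
  assumes "N > 0" and "p > 0"
    and stair: "\<And>\<alpha>. \<alpha> \<subseteq> {..<N} \<Longrightarrow> staircase_mat p N \<alpha> (A \<alpha>)"
    and zero: "\<And>u :: (nat \<Rightarrow> real) \<Rightarrow> complex ^ 'm. L2 N u \<Longrightarrow>
                 AE k in cubeM {..<N}. (\<Sum>\<alpha> \<in> Pow {..<N}. avg_op \<alpha> (A \<alpha>) u k) = 0"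
  shows "\<forall>\<alpha> \<subseteq> {..<N}. \<forall>k \<in> cube {..<N}. \<forall>x \<in> cube \<alpha>. A \<alpha> k x = 0"
proof -
  have P: "\<alpha> \<subseteq> {..<N} \<longrightarrow> (\<forall>k \<in> cube {..<N}. \<forall>x \<in> cube \<alpha>. A \<alpha> k x = 0)" for \<alpha>
  proof (induction "N - card \<alpha>" arbitrary: \<alpha> rule: less_induct)
    case less
    show ?case
    proof (intro impI ballI)
      fix k0 x0 assume a: "\<alpha> \<subseteq> {..<N}" and k0: "k0 \<in> cube {..<N}" and x0: "x0 \<in> cube \<alpha>"
      have IH: "A \<beta> k x = 0" if "\<alpha> \<subset> \<beta>" "\<beta> \<subseteq> {..<N}" "k \<in> cube {..<N}" "x \<in> cube \<beta>" for \<beta> k x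
      proof -
        have "finite \<beta>" using that(2) finite_subset by blast
        then have "card \<alpha> < card \<beta>" using that(1) by (rule psubset_card_mono)
        moreover have "card \<beta> \<le> N" using card_mono[OF _ that(2)] by simp
        ultimately have "N - card \<beta> < N - card \<alpha>" by linarith
        then show ?thesis using less that by blast
      qed
      have sv: "A \<alpha> k0 x0 *v v = 0" for v
        apply (rule step[of p N A \<alpha> k0 x0 v])
              apply (rule \<open>p > 0\<close>)
             apply (erule stair)
            apply (erule zero)
           apply (rule a)
          apply (erule (3) IH)
         apply (rule k0)
        apply (rule x0)
        done
      have "\<forall>v. A \<alpha> k0 x0 *v v = 0 *v v" using sv by simp
      then show "A \<alpha> k0 x0 = 0" using matrix_eq by blast
    qed
  qed
  then show ?thesis by blast
qed

end
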